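(* Let $A$ be a real symmetric $n\times n$ matrix with symmetric tropical rank $r$. Choose a real number $M$ less than every entry of $A$ and a real number $P$ greater than every entry of $A$, and define the $(n+1)\times(n+1)$ matrix $$A'=\begin{pmatrix}A&\mathbf P\\ \mathbf P^{T}&M\end{pmatrix},$$ where $\mathbf P$ is the column vector of length $n$ with all entries $P$. Then $A'$ has symmetric tropical rank $r+1$.
   Context: For an $r\times r$ submatrix of a real symmetric matrix $A$ with row index set $I$ and column index set $J$, each bijection $\rho:I\to J$ gives a monomial $\prod_{i\in I}X_{i,\rho(i)}$ in commuting variables subject to $X_{i,j}=X_{j,i}$, with value $\sum_{i\in I}A_{i,\rho(i)}$; the submatrix is symmetrically tropically singular if the minimum value is attained by at least two distinct monomials. The symmetric tropical rank of $A$ is the largest $r$ such that $A$ has an $r\times r$ submatrix (arbitrary row and column sets) that is not symmetrically tropically singular. *)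

theory Defs
  imports Complex_Main "HOL-Library.Multiset"
begin

text \<open>Matrices are functions nat => nat => real, the n x n matrix uses indices 0..n-1.
 A monomial prod_{i in I} X_{i,rho i} in commuting variables with X_ij = X_ji is
 the multiset of unordered index pairs {i, rho i}.\<close>

definition sym_monomial :: "(nat \<Rightarrow> nat) \<Rightarrow> nat set \<Rightarrow> nat set multiset" where
  "sym_monomial \<rho> I = image_mset (\<lambda>i. {i, \<rho> i}) (mset_set I)"

definition trop_value :: "(nat \<Rightarrow> nat \<Rightarrow> real) \<Rightarrow> (nat \<Rightarrow> nat) \<Rightarrow> nat set \<Rightarrow> real" where
  "trop_value A \<rho> I = (\<Sum>i\<in>I. A i (\<rho> i))"

definition sym_trop_singular :: "(nat \<Rightarrow> nat \<Rightarrow> real) \<Rightarrow> nat set \<Rightarrow> nat set \<Rightarrow> bool" where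
  "sym_trop_singular A I J \<longleftrightarrow>
     (\<exists>\<rho>1 \<rho>2. bij_betw \<rho>1 I J \<and> bij_betw \<rho>2 I J \<and>
        (\<forall>\<sigma>. bij_betw \<sigma> I J \<longrightarrow> trop_value A \<rho>1 I \<le> trop_value A \<sigma> I) \<and>
        (\<forall>\<sigma>. bij_betw \<sigma> I J \<longrightarrow> trop_value A \<rho>2 I \<le> trop_value A \<sigma> I) \<and>
        sym_monomial \<rho>1 I \<noteq> sym_monomial \<rho>2 I)"

definition sym_trop_rank :: "nat \<Rightarrow> (nat \<Rightarrow> nat \<Rightarrow> real) \<Rightarrow> nat" where
  "sym_trop_rank n A = Max {r. \<exists>I J. I \<subseteq> {..<n} \<and> J \<subseteq> {..<n} \<and> card I = r \<and> card J = r
                                  \<and> \<not> sym_trop_singular A I J}"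

end

theory Submission
  imports Defs "HOL-Library.FuncSet"
begin

lemma sing_cong:
  assumes "\<forall>i\<in>I. \<forall>j\<in>J. B i j = A i j"
  shows "sym_trop_singular B I J = sym_trop_singular A I J"
proof -
  have eq: "\<And>\<sigma>. bij_betw \<sigma> I J \<Longrightarrow> trop_value B \<sigma> I = trop_value A \<sigma> I"
    using assms unfolding trop_value_def bij_betw_def by (auto intro!: sum.cong)
  show ?thesis unfolding sym_trop_singular_def
  proof
    assume "\<exists>\<rho>1 \<rho>2. bij_betw \<rho>1 I J \<and> bij_betw \<rho>2 I J \<and>
        (\<forall>\<sigma>. bij_betw \<sigma> I J \<longrightarrow> trop_value B \<rho>1 I \<le> trop_value B \<sigma> I) \<and>
        (\<forall>\<sigma>. bij_betw \<sigma> I J \<longrightarrow> trop_value B \<rho>2 I \<le> trop_value B \<sigma> I) \<and>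
        sym_monomial \<rho>1 I \<noteq> sym_monomial \<rho>2 I"
    then show "\<exists>\<rho>1 \<rho>2. bij_betw \<rho>1 I J \<and> bij_betw \<rho>2 I J \<and>
        (\<forall>\<sigma>. bij_betw \<sigma> I J \<longrightarrow> trop_value A \<rho>1 I \<le> trop_value A \<sigma> I) \<and>
        (\<forall>\<sigma>. bij_betw \<sigma> I J \<longrightarrow> trop_value A \<rho>2 I \<le> trop_value A \<sigma> I) \<and>
        sym_monomial \<rho>1 I \<noteq> sym_monomial \<rho>2 I"
      using eq by metis
  next
    assume "\<exists>\<rho>1 \<rho>2. bij_betw \<rho>1 I J \<and> bij_betw \<rho>2 I J \<and>
        (\<forall>\<sigma>. bij_betw \<sigma> I J \<longrightarrow> trop_value A \<rho>1 I \<le> trop_value A \<sigma> I) \<and>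
        (\<forall>\<sigma>. bij_betw \<sigma> I J \<longrightarrow> trop_value A \<rho>2 I \<le> trop_value A \<sigma> I) \<and>
        sym_monomial \<rho>1 I \<noteq> sym_monomial \<rho>2 I"
    then show "\<exists>\<rho>1 \<rho>2. bij_betw \<rho>1 I J \<and> bij_betw \<rho>2 I J \<and>
        (\<forall>\<sigma>. bij_betw \<sigma> I J \<longrightarrow> trop_value B \<rho>1 I \<le> trop_value B \<sigma> I) \<and>
        (\<forall>\<sigma>. bij_betw \<sigma> I J \<longrightarrow> trop_value B \<rho>2 I \<le> trop_value B \<sigma> I) \<and>
        sym_monomial \<rho>1 I \<noteq> sym_monomial \<rho>2 I"
      using eq by metis
  qed
qed

lemma minimizer_exists:
  assumes "finite I" "finite J" "card I = card J"
  shows "\<exists>\<rho>. bij_betw \<rho> I J \<and> (\<forall>\<sigma>. bij_betw \<sigma> I J \<longrightarrow> trop_value A \<rho> I \<le> trop_value A \<sigma> I)"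
proof -
  let ?S = "{\<sigma>. bij_betw \<sigma> I J} \<inter> (I \<rightarrow>\<^sub>E J)"
  have fin: "finite ?S" by (rule finite_Int, rule disjI2, rule finite_PiE) (use assms in auto)
  have res: "restrict \<sigma> I \<in> ?S \<and> trop_value A (restrict \<sigma> I) I = trop_value A \<sigma> I"
    if "bij_betw \<sigma> I J" for \<sigma>
  proof (intro conjI IntI CollectI)
    show "bij_betw (restrict \<sigma> I) I J" using bij_betw_cong[of I "restrict \<sigma> I" \<sigma> J] that by simp
    have "\<sigma> ` I \<subseteq> J" using that by (simp add: bij_betw_def)
    then show "restrict \<sigma> I \<in> I \<rightarrow>\<^sub>E J" by (simp add: restrict_PiE_iff image_subset_iff)
    show "trop_value A (restrict \<sigma> I) I = trop_value A \<sigma> I" unfolding trop_value_def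
      by (rule sum.cong) simp_all
  qed
  obtain \<rho>0 where "bij_betw \<rho>0 I J" using finite_same_card_bij assms by blast
  then have ne: "?S \<noteq> {}" using res[of \<rho>0] by (metis empty_iff)
  define \<rho> where "\<rho> = arg_min_on (\<lambda>\<sigma>. trop_value A \<sigma> I) ?S"
  have r1: "\<rho> \<in> ?S" and r2: "\<not>(\<exists>x\<in>?S. trop_value A x I < trop_value A \<rho> I)"
    using arg_min_if_finite[OF fin ne, of "\<lambda>\<sigma>. trop_value A \<sigma> I"] unfolding \<rho>_def by simp_all
  show ?thesis
  proof (intro exI conjI allI impI)
    show "bij_betw \<rho> I J" using r1 by simp
    fix \<sigma> assume "bij_betw \<sigma> I J"
    from res[OF this] r2 show "trop_value A \<rho> I \<le> trop_value A \<sigma> I" by (metis not_le)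
  qed
qed

definition swp :: "nat \<Rightarrow> nat \<Rightarrow> nat \<Rightarrow> nat" where
  "swp a b = (\<lambda>i. if i = a then b else if i = b then a else i)"

lemma bij_swp: assumes "a \<in> I" "b \<in> I" shows "bij_betw (swp a b) I I"
proof (rule bij_betw_byWitness[where f' = "swp a b"])
  show "\<forall>x\<in>I. swp a b (swp a b x) = x" "\<forall>x\<in>I. swp a b (swp a b x) = x"
    by (auto simp: swp_def)
  show "swp a b ` I \<subseteq> I" "swp a b ` I \<subseteq> I" using assms by (auto simp: swp_def)
qed

lemma swap_value:
  assumes "finite I" "i0 \<in> I" "i1 \<in> I" "i0 \<noteq> i1"
  shows "trop_value B (\<rho> \<circ> swp i0 i1) I
       = trop_value B \<rho> I - B i0 (\<rho> i0) - B i1 (\<rho> i1) + B i0 (\<rho> i1) + B i1 (\<rho> i0)"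
proof -
  have rest: "(\<Sum>i\<in>I - {i0} - {i1}. B i ((\<rho> \<circ> swp i0 i1) i)) = (\<Sum>i\<in>I - {i0} - {i1}. B i (\<rho> i))"
    by (rule sum.cong) (auto simp: swp_def)
  have split: "sum f I = f i0 + f i1 + sum f (I - {i0} - {i1})" for f :: "nat \<Rightarrow> real"
  proof -
    have "sum f I = f i0 + sum f (I - {i0})" using assms by (simp add: sum.remove)
    moreover have "sum f (I - {i0}) = f i1 + sum f (I - {i0} - {i1})" using assms by (simp add: sum.remove)
    ultimately show ?thesis by simp
  qed
  have "trop_value B (\<rho> \<circ> swp i0 i1) I = B i0 (\<rho> i1) + B i1 (\<rho> i0) + (\<Sum>i\<in>I - {i0} - {i1}. B i (\<rho> i))"
    unfolding trop_value_def split[of "\<lambda>i. B i ((\<rho> \<circ> swp i0 i1) i)"] rest using assms by (simp add: swp_def)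
  moreover have "trop_value B \<rho> I = B i0 (\<rho> i0) + B i1 (\<rho> i1) + (\<Sum>i\<in>I - {i0} - {i1}. B i (\<rho> i))"
    unfolding trop_value_def split[of "\<lambda>i. B i (\<rho> i)"] ..
  ultimately show ?thesis by simp
qed

lemma ext_bij:
  assumes "i0 \<notin> I" "j0 \<notin> J" "bij_betw \<tau> I J"
  shows "bij_betw (\<tau>(i0 := j0)) (insert i0 I) (insert j0 J)"
proof -
  have "bij_betw (\<tau>(i0 := j0)) I J"
  proof (subst bij_betw_cong[of I _ \<tau>])
    show "\<And>a. a \<in> I \<Longrightarrow> (\<tau>(i0 := j0)) a = \<tau> a" using assms(1) by auto
  qed (rule assms(3))
  then have "bij_betw (\<tau>(i0 := j0)) (I \<union> {i0}) (J \<union> {(\<tau>(i0 := j0)) i0})"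
    using assms notIn_Un_bij_betw[of i0 I "\<tau>(i0 := j0)" J] by simp
  then show ?thesis by simp
qed

lemma ext_val:
  assumes "finite I" "i0 \<notin> I"
  shows "trop_value B (\<tau>(i0 := j0)) (insert i0 I) = B i0 j0 + trop_value B \<tau> I"
  using assms unfolding trop_value_def
  by (simp add: sum.insert) (rule sum.cong, auto)

lemma ext_mono:
  assumes "finite I" "i0 \<notin> I"
  shows "sym_monomial (\<tau>(i0 := j0)) (insert i0 I) = add_mset {i0, j0} (sym_monomial \<tau> I)"
proof -
  have "image_mset (\<lambda>i. {i, (\<tau>(i0 := j0)) i}) (mset_set I) = image_mset (\<lambda>i. {i, \<tau> i}) (mset_set I)"
    using assms by (intro image_mset_cong) auto
  then show ?thesis using assms unfolding sym_monomial_def by simp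
qed

lemma res_bij:
  assumes "bij_betw \<rho> I J" "i0 \<in> I"
  shows "bij_betw \<rho> (I - {i0}) (J - {\<rho> i0})"
  using assms bij_betw_DiffI[of \<rho> I J "{i0}" "{\<rho> i0}"] by (auto simp: bij_betw_def)

lemma res_val:
  assumes "finite I" "i0 \<in> I"
  shows "trop_value B \<rho> I = B i0 (\<rho> i0) + trop_value B \<rho> (I - {i0})"
  using assms unfolding trop_value_def by (simp add: sum.remove)

lemma upd_same: "\<rho> i0 = j0 \<Longrightarrow> \<rho>(i0 := j0) = \<rho>" by auto

lemma remove_nonsing:
  assumes fin: "finite I" "finite J" and rho: "bij_betw \<rho> I J"
    and min: "\<forall>\<sigma>. bij_betw \<sigma> I J \<longrightarrow> trop_value B \<rho> I \<le> trop_value B \<sigma> I"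
    and i0: "i0 \<in> I" and ns: "\<not> sym_trop_singular B I J"
  shows "\<not> sym_trop_singular B (I - {i0}) (J - {\<rho> i0})"
proof
  let ?I = "I - {i0}" and ?J = "J - {\<rho> i0}"
  have j0: "\<rho> i0 \<in> J" using rho i0 by (auto simp: bij_betw_def)
  have II: "insert i0 ?I = I" and JJ: "insert (\<rho> i0) ?J = J" using i0 j0 by auto
  assume "sym_trop_singular B ?I ?J"
  then obtain \<tau>1 \<tau>2 where t1: "bij_betw \<tau>1 ?I ?J" and t2: "bij_betw \<tau>2 ?I ?J"
    and m1: "\<forall>\<sigma>. bij_betw \<sigma> ?I ?J \<longrightarrow> trop_value B \<tau>1 ?I \<le> trop_value B \<sigma> ?I"
    and m2: "\<forall>\<sigma>. bij_betw \<sigma> ?I ?J \<longrightarrow> trop_value B \<tau>2 ?I \<le> trop_value B \<sigma> ?I"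
    and ne: "sym_monomial \<tau>1 ?I \<noteq> sym_monomial \<tau>2 ?I"
    unfolding sym_trop_singular_def by blast
  have rr: "bij_betw \<rho> ?I ?J" using res_bij[OF rho i0] .
  have rv: "trop_value B \<rho> I = B i0 (\<rho> i0) + trop_value B \<rho> ?I" using res_val[OF fin(1) i0] .
  have good: "bij_betw (\<tau>(i0 := \<rho> i0)) I J \<and>
     (\<forall>\<sigma>. bij_betw \<sigma> I J \<longrightarrow> trop_value B (\<tau>(i0 := \<rho> i0)) I \<le> trop_value B \<sigma> I)"
    if "bij_betw \<tau> ?I ?J" "\<forall>\<sigma>. bij_betw \<sigma> ?I ?J \<longrightarrow> trop_value B \<tau> ?I \<le> trop_value B \<sigma> ?I" for \<tau>
  proof
    show "bij_betw (\<tau>(i0 := \<rho> i0)) I J" using ext_bij[OF _ _ that(1), of i0 "\<rho> i0"] II JJ by simp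
    have "trop_value B (\<tau>(i0 := \<rho> i0)) I = B i0 (\<rho> i0) + trop_value B \<tau> ?I"
      using ext_val[of ?I i0 B \<tau> "\<rho> i0"] fin II by simp
    also have "\<dots> \<le> trop_value B \<rho> I" using rv that(2) rr by auto
    finally show "\<forall>\<sigma>. bij_betw \<sigma> I J \<longrightarrow> trop_value B (\<tau>(i0 := \<rho> i0)) I \<le> trop_value B \<sigma> I"
      using min by force
  qed
  have "sym_monomial (\<tau>(i0 := \<rho> i0)) I = add_mset {i0, \<rho> i0} (sym_monomial \<tau> ?I)" for \<tau>
    using ext_mono[of ?I i0 \<tau> "\<rho> i0"] fin II by simp
  then have "sym_monomial (\<tau>1(i0 := \<rho> i0)) I \<noteq> sym_monomial (\<tau>2(i0 := \<rho> i0)) I" using ne by simp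
  then have "sym_trop_singular B I J" unfolding sym_trop_singular_def
    using good[OF t1 m1] good[OF t2 m2] by blast
  then show False using ns by blast
qed

lemma exchange:
  assumes fin: "finite I" and rho: "bij_betw \<rho> I J" and nI: "n \<in> I" and nJ: "n \<in> J"
    and sub: "I \<subseteq> {..<Suc n}" "J \<subseteq> {..<Suc n}" and rn: "\<rho> n \<noteq> n"
    and B1: "\<forall>i<n. B i n = P" and B2: "\<forall>j<n. B n j = P" and B3: "B n n = M"
    and B4: "\<forall>i<n. \<forall>j<n. B i j < P" and MP: "M < P"
  shows "\<exists>\<sigma>. bij_betw \<sigma> I J \<and> trop_value B \<sigma> I < trop_value B \<rho> I"
proof -
  define i0 where "i0 = inv_into I \<rho> n"
  have i0I: "i0 \<in> I" and ri0: "\<rho> i0 = n" unfolding i0_def using rho nJ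
    by (auto simp: bij_betw_def inv_into_into f_inv_into_f)
  have i0n: "i0 \<noteq> n" using ri0 rn by auto
  have i0lt: "i0 < n" using i0I sub i0n by auto
  have rnJ: "\<rho> n \<in> J" using rho nI by (auto simp: bij_betw_def)
  have rnlt: "\<rho> n < n" using rnJ sub rn by auto
  have bt: "bij_betw (swp n i0) I I" using nI i0I by (rule bij_swp)
  have bs: "bij_betw (\<rho> \<circ> swp n i0) I J" using bij_betw_trans[OF bt rho] .
  have "trop_value B (\<rho> \<circ> swp n i0) I
       = trop_value B \<rho> I - B n (\<rho> n) - B i0 (\<rho> i0) + B n (\<rho> i0) + B i0 (\<rho> n)"
    using swap_value[OF fin nI i0I] i0n by auto
  also have "\<dots> = trop_value B \<rho> I - P - P + M + B i0 (\<rho> n)"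
    using B1 B2 B3 ri0 rnlt i0lt by simp
  also have "\<dots> < trop_value B \<rho> I" using B4 i0lt rnlt MP by force
  finally show ?thesis using bs by blast
qed

lemma empty_nonsing: "\<not> sym_trop_singular B {} {}"
  unfolding sym_trop_singular_def sym_monomial_def by simp

theorem lemma7:
  fixes A :: "nat \<Rightarrow> nat \<Rightarrow> real" and n r :: nat and M P :: real
  assumes symA: "\<forall>i<n. \<forall>j<n. A i j = A j i"
    and rank: "sym_trop_rank n A = r"
    and M_lt: "\<forall>i<n. \<forall>j<n. M < A i j"
    and P_gt: "\<forall>i<n. \<forall>j<n. A i j < P"
  shows "sym_trop_rank (n + 1)
           (\<lambda>i j. if i < n \<and> j < n then A i j else if i < n \<or> j < n then P else M) = r + 1"
proof -
  define B where "B = (\<lambda>i j. if i < n \<and> j < n then A i j else if i < n \<or> j < n then P else M)"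
  define SA where "SA = {r. \<exists>I J. I \<subseteq> {..<n} \<and> J \<subseteq> {..<n} \<and> card I = r \<and> card J = r
                                  \<and> \<not> sym_trop_singular A I J}"
  define SB where "SB = {r. \<exists>I J. I \<subseteq> {..<n+1} \<and> J \<subseteq> {..<n+1} \<and> card I = r \<and> card J = r
                                  \<and> \<not> sym_trop_singular B I J}"
  have B1: "\<forall>i<n. B i n = P" and B2: "\<forall>j<n. B n j = P" and B3: "B n n = M"
    and B4: "\<forall>i<n. \<forall>j<n. B i j < P" and BA: "\<forall>i<n. \<forall>j<n. B i j = A i j"
    unfolding B_def using P_gt by auto
  have transfer: "sym_trop_singular B I J = sym_trop_singular A I J" if "I \<subseteq> {..<n}" "J \<subseteq> {..<n}" for I J
    using sing_cong[of I J B A] that BA by auto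
  have SAfin: "finite SA"
  proof (rule finite_subset)
    show "SA \<subseteq> {..n}" unfolding SA_def using card_mono[of "{..<n}"] by fastforce
  qed simp
  have SBfin: "finite SB"
  proof (rule finite_subset)
    show "SB \<subseteq> {..n+1}" unfolding SB_def using card_mono[of "{..<n+1}"] by fastforce
  qed simp
  have "0 \<in> SA" unfolding SA_def using empty_nonsing[of A] by (intro CollectI exI[of _ "{}"]) auto
  then have rSA: "r \<in> SA" and rmax: "\<And>k. k \<in> SA \<Longrightarrow> k \<le> r"
    using rank SAfin Max_in[OF SAfin] unfolding sym_trop_rank_def SA_def[symmetric] by auto
  have MP: "M < P" if "n > 0" using M_lt P_gt that by force
  show ?thesis
    unfolding sym_trop_rank_def B_def[symmetric] SB_def[symmetric]
  proof (rule Max_eqI[OF SBfin])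
    fix k assume "k \<in> SB"
    then obtain I J where IJ: "I \<subseteq> {..<n+1}" "J \<subseteq> {..<n+1}" "card I = k" "card J = k"
      and ns: "\<not> sym_trop_singular B I J" unfolding SB_def by blast
    have finI: "finite I" and finJ: "finite J" using IJ finite_subset by auto
    show "k \<le> r + 1"
    proof (cases "n \<in> I \<or> n \<in> J")
      case False
      then have "I \<subseteq> {..<n}" "J \<subseteq> {..<n}" using IJ by (auto simp: subset_iff less_Suc_eq)
      then have "\<not> sym_trop_singular A I J" using ns transfer by simp
      then have "k \<in> SA" unfolding SA_def using IJ \<open>I \<subseteq> {..<n}\<close> \<open>J \<subseteq> {..<n}\<close> by blast
      then show ?thesis using rmax by force
    next
      case True
      obtain \<rho> where rho: "bij_betw \<rho> I J"
        and min: "\<forall>\<sigma>. bij_betw \<sigma> I J \<longrightarrow> trop_value B \<rho> I \<le> trop_value B \<sigma> I"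
        using minimizer_exists[OF finI finJ] IJ by metis
      have "\<exists>i0\<in>I. I - {i0} \<subseteq> {..<n} \<and> J - {\<rho> i0} \<subseteq> {..<n}"
      proof (cases "n \<in> I \<and> n \<in> J")
        case True
        have "\<rho> n = n"
        proof (rule ccontr)
          assume "\<rho> n \<noteq> n"
          have "n > 0" using \<open>\<rho> n \<noteq> n\<close> rho True IJ by (auto simp: bij_betw_def)
          then obtain \<sigma> where "bij_betw \<sigma> I J" "trop_value B \<sigma> I < trop_value B \<rho> I"
            using exchange[OF finI rho _ _ _ _ \<open>\<rho> n \<noteq> n\<close> B1 B2 B3 B4 MP] True IJ by auto
          then show False using min by force
        qed
        then show ?thesis using True IJ by (intro bexI[of _ n]) (auto simp: subset_iff less_Suc_eq)
      next
        case nb: False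
        show ?thesis
        proof (cases "n \<in> I")
          case True
          then have "n \<notin> J" using nb by blast
          then show ?thesis using True IJ by (intro bexI[of _ n]) (auto simp: subset_iff less_Suc_eq)
        next
          case False
          then have nJ: "n \<in> J" using \<open>n \<in> I \<or> n \<in> J\<close> by blast
          define i0 where "i0 = inv_into I \<rho> n"
          have i0I: "i0 \<in> I" and ri0: "\<rho> i0 = n" unfolding i0_def using rho nJ
            by (auto simp: bij_betw_def inv_into_into f_inv_into_f)
          show ?thesis using i0I ri0 False IJ by (intro bexI[of _ i0]) (auto simp: subset_iff less_Suc_eq)
        qed
      qed
      then obtain i0 where i0: "i0 \<in> I" and sub: "I - {i0} \<subseteq> {..<n}" "J - {\<rho> i0} \<subseteq> {..<n}" by blast
      have j0: "\<rho> i0 \<in> J" using rho i0 by (auto simp: bij_betw_def)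
      have "\<not> sym_trop_singular B (I - {i0}) (J - {\<rho> i0})"
        using remove_nonsing[OF finI finJ rho min i0 ns] .
      then have "\<not> sym_trop_singular A (I - {i0}) (J - {\<rho> i0})" using transfer[OF sub] by simp
      moreover have "card (I - {i0}) = k - 1" "card (J - {\<rho> i0}) = k - 1"
        using IJ i0 j0 finI finJ by auto
      ultimately have "k - 1 \<in> SA" unfolding SA_def using sub by blast
      then show ?thesis using rmax by force
    qed
  next
    obtain I J where IJ: "I \<subseteq> {..<n}" "J \<subseteq> {..<n}" "card I = r" "card J = r"
      and ns: "\<not> sym_trop_singular A I J" using rSA unfolding SA_def by blast
    have finI: "finite I" and finJ: "finite J" using IJ finite_subset by auto
    have nI: "n \<notin> I" and nJ: "n \<notin> J" using IJ by auto
    let ?I = "insert n I" and ?J = "insert n J"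
    have sub': "?I \<subseteq> {..<Suc n}" "?J \<subseteq> {..<Suc n}" using IJ by auto
    have card': "card ?I = r + 1" "card ?J = r + 1" using IJ finI finJ nI nJ by auto
    have "\<not> sym_trop_singular B ?I ?J"
    proof
      assume "sym_trop_singular B ?I ?J"
      then obtain \<rho>1 \<rho>2 where t1: "bij_betw \<rho>1 ?I ?J" and t2: "bij_betw \<rho>2 ?I ?J"
        and m1: "\<forall>\<sigma>. bij_betw \<sigma> ?I ?J \<longrightarrow> trop_value B \<rho>1 ?I \<le> trop_value B \<sigma> ?I"
        and m2: "\<forall>\<sigma>. bij_betw \<sigma> ?I ?J \<longrightarrow> trop_value B \<rho>2 ?I \<le> trop_value B \<sigma> ?I"
        and ne: "sym_monomial \<rho>1 ?I \<noteq> sym_monomial \<rho>2 ?I"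
        unfolding sym_trop_singular_def by blast
      have good: "bij_betw \<rho> I J \<and> (\<forall>\<sigma>. bij_betw \<sigma> I J \<longrightarrow> trop_value B \<rho> I \<le> trop_value B \<sigma> I)
          \<and> sym_monomial \<rho> ?I = add_mset {n, n} (sym_monomial \<rho> I)"
        if t: "bij_betw \<rho> ?I ?J" and m: "\<forall>\<sigma>. bij_betw \<sigma> ?I ?J \<longrightarrow> trop_value B \<rho> ?I \<le> trop_value B \<sigma> ?I"
        for \<rho>
      proof -
        have rn: "\<rho> n = n"
        proof (rule ccontr)
          assume "\<rho> n \<noteq> n"
          have "\<rho> n \<in> ?J" using t by (auto simp: bij_betw_def)
          then have "\<rho> n \<in> J" using \<open>\<rho> n \<noteq> n\<close> by simp
          then have "n > 0" using IJ(2) by auto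
          then obtain \<sigma> where "bij_betw \<sigma> ?I ?J" "trop_value B \<sigma> ?I < trop_value B \<rho> ?I"
            using exchange[OF _ t _ _ sub' \<open>\<rho> n \<noteq> n\<close> B1 B2 B3 B4 MP] finI by auto
          then show False using m by force
        qed
        have b: "bij_betw \<rho> I J" using res_bij[OF t, of n] rn nI nJ by simp
        have v: "trop_value B \<rho> ?I = B n n + trop_value B \<rho> I"
          using res_val[of ?I n B \<rho>] finI nI rn by simp
        have mm: "trop_value B \<rho> I \<le> trop_value B \<sigma> I" if "bij_betw \<sigma> I J" for \<sigma>
          using m ext_bij[OF nI nJ that] ext_val[OF finI nI, of B \<sigma> n] v by force
        have "sym_monomial \<rho> ?I = add_mset {n, n} (sym_monomial \<rho> I)"
          using ext_mono[OF finI nI, of \<rho> n] upd_same[of \<rho> n n, OF rn] by simp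
        then show ?thesis using b mm by blast
      qed
      have "sym_monomial \<rho>1 I \<noteq> sym_monomial \<rho>2 I" using ne good[OF t1 m1] good[OF t2 m2] by auto
      then have "sym_trop_singular B I J" unfolding sym_trop_singular_def
        using good[OF t1 m1] good[OF t2 m2] by blast
      then show False using ns transfer[OF IJ(1,2)] by simp
    qed
    then show "r + 1 \<in> SB" unfolding SB_def mem_Collect_eq
      by (intro exI[of _ ?I] exI[of _ ?J]) (use sub' card' in simp)
  qed
qed

end
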